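(* Let $k\ge3$. For $0\le m\le P_k-1$ let $S_k^{(m)}=\{N:5+mP_{k-1}\#\le N\le 4+(m+1)P_{k-1}\#\}$, and let $\widetilde P^{(m)<}$ and $\widetilde P^{(m)>}$ be the least and greatest integers in $S_k^{(m)}$ that are coprime to $P_k\#$. For $1\le m\le P_k-1$ define the subset gap $g_m=\widetilde P^{(m)<}-\widetilde P^{(m-1)>}$. Then among the $P_k-1$ subset gaps $g_1,\dots,g_{P_k-1}$, exactly $P_k-2$ equal $P_k-1$ and exactly one equals $P_k+1$.
   Context: $P_k$ denotes the $k$-th prime ($P_1=2$) and $P_k\#=\prod_{i=1}^kP_i$. *)

theory Defs
  imports "HOL-Computational_Algebra.Primes" "HOL-Library.Infinite_Set"
begin

text \<open>P k: the k-th prime, 1-indexed (P 1 = 2).\<close>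
definition P :: "nat \<Rightarrow> nat" where
  "P k = enumerate {p::nat. prime p} (k - 1)"

definition prim :: "nat \<Rightarrow> nat" where
  "prim k = (\<Prod>i\<in>{1..k}. P i)"

definition subsetS :: "nat \<Rightarrow> nat \<Rightarrow> nat set" where
  "subsetS k m = {N. 5 + m * prim (k - 1) \<le> N \<and> N \<le> 4 + (m + 1) * prim (k - 1)}"

definition Plow :: "nat \<Rightarrow> nat \<Rightarrow> nat" where
  "Plow k m = Min {N \<in> subsetS k m. coprime N (prim k)}"

definition Phigh :: "nat \<Rightarrow> nat \<Rightarrow> nat" where
  "Phigh k m = Max {N \<in> subsetS k m. coprime N (prim k)}"

definition subset_gap :: "nat \<Rightarrow> nat \<Rightarrow> int" where
  "subset_gap k m = int (Plow k m) - int (Phigh k (m - 1))"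

end

theory Submission
  imports Defs
begin

lemma inf_primes: "infinite {p::nat. prime p}"
  using primes_infinite by blast

lemma P_prime: "prime (P k)"
  unfolding P_def using enumerate_in_set[OF inf_primes] by blast

lemma P_less_iff: "P i < P j \<longleftrightarrow> i - 1 < j - 1"
  unfolding P_def using inf_primes by simp

lemma P_1: "P 1 = 2"
proof -
  have "(LEAST n::nat. n \<in> {p. prime p}) = 2"
    by (rule Least_equality) (auto simp: prime_ge_2_nat)
  then show ?thesis unfolding P_def using enumerate_0[of "{p::nat. prime p}"] by simp
qed

lemma prime_less_P: assumes "prime q" "q < P k" shows "\<exists>i\<in>{1..k-1}. q = P i"
proof -
  obtain n where n: "enumerate {p::nat. prime p} n = q"
    using enumerate_Ex[OF inf_primes, of q] assms(1) by auto
  hence "q = P (n+1)" unfolding P_def by simp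
  with assms(2) have "n < k - 1" using P_less_iff[of "n+1" k] by simp
  with \<open>q = P (n+1)\<close> show ?thesis by force
qed

lemma prime_less_dvd_prim: assumes "prime q" "q < P k" shows "q dvd prim (k-1)"
proof -
  obtain i where "i \<in> {1..k-1}" "q = P i" using prime_less_P[OF assms] by blast
  thus ?thesis unfolding prim_def by (simp add: dvd_prodI)
qed

lemma P_not_dvd_prim: "\<not> P k dvd prim (k-1)"
proof
  assume "P k dvd prim (k-1)"
  then obtain i where i: "i \<in> {1..k-1}" "P k dvd P i"
    unfolding prim_def using prime_dvd_prod_iff[OF _ P_prime] by (meson finite_atLeastAtMost)
  hence "P k = P i" using P_prime primes_dvd_imp_eq by blast
  moreover have "P i < P k" using i(1) P_less_iff[of i k] by auto
  ultimately show False by simp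
qed

lemma prim_split: "k \<ge> 1 \<Longrightarrow> prim k = prim (k-1) * P k"
proof -
  assume "k \<ge> 1"
  then obtain j where j: "k = Suc j" by (cases k) auto
  show ?thesis unfolding prim_def j by (simp add: atLeastAtMostSuc_conv mult.commute)
qed

lemma shift_coprime: "coprime (r + m * Q) (Q::nat) \<longleftrightarrow> coprime r Q"
  by (metis add.commute coprime_iff_gcd_eq_1 gcd.commute gcd_add_mult)

theorem lemma9:
  fixes k :: nat
  assumes "k \<ge> 3"
  shows "card {m \<in> {1..P k - 1}. subset_gap k m = int (P k) - 1} = P k - 2
       \<and> card {m \<in> {1..P k - 1}. subset_gap k m = int (P k) + 1} = 1"
proof -
  define Q where "Q = prim (k-1)"
  define p where "p = P k"
  have pp: "prime p" unfolding p_def by (rule P_prime)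
  have "P 1 < P 2" "P 2 < p" unfolding p_def using assms P_less_iff by auto
  hence p4: "p \<ge> 4" using P_1 by simp
  have p5: "p \<ge> 5"
  proof (rule ccontr)
    assume "\<not> p \<ge> 5" hence "p = 4" using p4 by simp
    hence "(2::nat) dvd p" by simp
    hence "2 = (1::nat) \<or> 2 = p" using pp unfolding prime_nat_iff by blast
    thus False using \<open>p = 4\<close> by simp
  qed
  have dQ: "prime q \<Longrightarrow> q < p \<Longrightarrow> q dvd Q" for q
    unfolding Q_def p_def by (rule prime_less_dvd_prim)
  have d2: "2 dvd Q" using dQ[of 2] p4 by simp
  have d3: "3 dvd Q" using dQ[of 3] p4 by simp
  have Qpos: "Q > 0" unfolding Q_def prim_def using P_prime
    by (simp add: prime_gt_0_nat)
  have Q6: "Q \<ge> 6"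
  proof -
    have "6 dvd Q" using d2 d3 by presburger
    thus ?thesis using Qpos by (simp add: dvd_imp_le)
  qed
  have npQ: "\<not> p dvd Q" unfolding p_def Q_def by (rule P_not_dvd_prim)
  have cpQ: "coprime p Q" using npQ pp by (simp add: prime_imp_coprime)
  have pQ: "p \<le> Q + 1"
  proof -
    obtain q where q: "prime q" "q dvd Q + 1" using prime_factor_nat[of "Q+1"] Qpos by auto
    have "\<not> q dvd Q"
    proof
      assume "q dvd Q" hence "q dvd 1" using q(2) dvd_add_right_iff by blast
      thus False using q(1) by simp
    qed
    hence "q \<ge> p" using dQ q(1) not_le by blast
    moreover have "q \<le> Q + 1" using q(2) by (simp add: dvd_imp_le)
    ultimately show ?thesis by simp
  qed
  have nc: "5 \<le> r \<Longrightarrow> r < p \<Longrightarrow> \<not> coprime r Q" for r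
  proof
    assume r: "5 \<le> r" "r < p" "coprime r Q"
    obtain q where q: "prime q" "q dvd r" using prime_factor_nat[of r] r by auto
    have "q \<le> r" using q r by (simp add: dvd_imp_le)
    hence "q dvd Q" using dQ q r by simp
    thus False using q r by (metis coprime_common_divisor not_prime_unit)
  qed
  have primk: "prim k = Q * p" unfolding Q_def p_def using prim_split assms by simp
  have cop: "coprime N (prim k) \<longleftrightarrow> coprime N Q \<and> coprime N p" for N
    unfolding primk by simp
  have S: "N \<in> subsetS k m \<longleftrightarrow> 5 + m * Q \<le> N \<and> N \<le> 4 + (m+1) * Q" for N m
    unfolding subsetS_def Q_def by simp
  have fin: "finite {N \<in> subsetS k m. coprime N (prim k)}" for m
    by (rule finite_subset[of _ "{..4 + (m+1)*Q}"]) (auto simp: S)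
  have Plow: "Plow k m = m * Q + p" if m: "1 \<le> m" "m < p" for m
    unfolding Plow_def
  proof (rule Min_eqI[OF fin])
    show "m * Q + p \<in> {N \<in> subsetS k m. coprime N (prim k)}"
    proof -
      have "coprime (p + m * Q) Q" using shift_coprime cpQ by blast
      moreover have "\<not> p dvd m * Q"
      proof
        assume "p dvd m * Q"
        hence "p dvd m" using npQ pp prime_dvd_mult_iff by blast
        hence "p \<le> m" using m by (simp add: dvd_imp_le)
        thus False using m by simp
      qed
      hence "coprime (m * Q + p) p" using pp
        by (metis coprime_commute dvd_add_left_iff dvd_refl prime_imp_coprime)
      ultimately show ?thesis using p5 pQ by (auto simp: S cop add.commute)
    qed
  next
    fix N assume N: "N \<in> {N \<in> subsetS k m. coprime N (prim k)}"
    show "m * Q + p \<le> N"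
    proof (rule ccontr)
      assume nt: "\<not> ?thesis"
      define r where "r = N - m * Q"
      have r: "N = r + m * Q" "5 \<le> r" "r < p" using N r_def nt by (auto simp: S)
      have "coprime r Q" using N shift_coprime r(1) by (auto simp: cop)
      thus False using nc r by blast
    qed
  qed
  have ncsmall: "r \<in> {2,3,4} \<Longrightarrow> \<not> coprime (r + m * Q) Q" for r m
    using d2 d3 shift_coprime
    by (auto simp: coprime_common_divisor_nat)
  have Phigh1: "Phigh k (m-1) = m * Q + 1" if m: "1 \<le> m" "\<not> p dvd m * Q + 1" for m
    unfolding Phigh_def
  proof (rule Max_eqI[OF fin])
    have "coprime (1 + m * Q) Q" using shift_coprime[of 1 m Q] coprime_1_left by blast
    moreover have "coprime (m * Q + 1) p" using m pp
      by (metis coprime_commute prime_imp_coprime)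
    ultimately show "m * Q + 1 \<in> {N \<in> subsetS k (m-1). coprime N (prim k)}"
      using m Q6 by (auto simp: S cop add.commute algebra_simps)
  next
    fix N assume N: "N \<in> {N \<in> subsetS k (m-1). coprime N (prim k)}"
    show "N \<le> m * Q + 1"
    proof (rule ccontr)
      assume nt: "\<not> ?thesis"
      define r where "r = N - m * Q"
      have r: "N = r + m * Q" "r \<in> {2,3,4}" using N r_def nt m by (auto simp: S)
      thus False using N ncsmall by (auto simp: cop)
    qed
  qed
  have Phigh2: "Phigh k (m-1) = m * Q - 1" if m: "1 \<le> m" "p dvd m * Q + 1" for m
    unfolding Phigh_def
  proof (rule Max_eqI[OF fin])
    have "m * Q = Q + (m - 1) * Q" using m by (cases m) auto
    hence e: "m * Q - 1 = (Q - 1) + (m - 1) * Q" using Q6 by linarith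
    have "coprime (Q - 1) (Suc (Q - 1))" by simp
    hence "coprime (Q - 1) Q" using Qpos by simp
    hence "coprime (m * Q - 1) Q" using e shift_coprime by simp
    moreover have "\<not> p dvd m * Q - 1"
    proof
      assume "p dvd m * Q - 1"
      hence "p dvd (m * Q + 1) - (m * Q - 1)" using m dvd_diff_nat by blast
      moreover have "m * Q \<ge> 1" using m Qpos by simp
      hence "(m * Q + 1) - (m * Q - 1) = 2" by linarith
      ultimately show False using p5 by (auto dest: dvd_imp_le)
    qed
    hence "coprime (m * Q - 1) p" using pp
      by (metis coprime_commute prime_imp_coprime)
    ultimately show "m * Q - 1 \<in> {N \<in> subsetS k (m-1). coprime N (prim k)}"
      using m Q6 e by (auto simp: S cop algebra_simps)
  next
    fix N assume N: "N \<in> {N \<in> subsetS k (m-1). coprime N (prim k)}"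
    show "N \<le> m * Q - 1"
    proof (rule ccontr)
      assume nt: "\<not> ?thesis"
      hence "N \<ge> m * Q" by simp
      moreover have "N \<noteq> m * Q"
      proof
        assume "N = m * Q"
        hence "coprime (m * Q) Q" using N by (simp add: cop)
        thus False using Q6 by simp
      qed
      moreover have "N \<noteq> m * Q + 1"
      proof
        assume "N = m * Q + 1"
        hence "coprime p (m * Q + 1)" using N by (simp add: cop coprime_commute)
        thus False using m(2) pp coprime_absorb_left not_prime_unit by blast
      qed
      moreover have "N \<le> 4 + m * Q" using N m by (auto simp: S)
      ultimately have r: "N = (N - m * Q) + m * Q" "N - m * Q \<in> {2,3,4}" by auto
      have "\<not> coprime (N - m * Q + m * Q) Q" by (rule ncsmall[OF r(2)])
      hence "\<not> coprime N Q" using r(1) by metis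
      thus False using N by (simp add: cop)
    qed
  qed
  have gap1: "subset_gap k m = int p - 1" if "1 \<le> m" "m < p" "\<not> p dvd m * Q + 1" for m
    using Plow Phigh1 that unfolding subset_gap_def by simp
  have gap2: "subset_gap k m = int p + 1" if "1 \<le> m" "m < p" "p dvd m * Q + 1" for m
  proof -
    have "m * Q \<ge> 1" using that Qpos by simp
    thus ?thesis using Plow Phigh2 that unfolding subset_gap_def by (simp add: of_nat_diff)
  qed
  obtain x y where xy: "Q * x = p * y + 1"
  proof -
    have "gcd Q p = 1" using cpQ by (simp add: coprime_iff_gcd_eq_1 gcd.commute)
    thus ?thesis using bezout_nat[of Q p] Qpos that by force
  qed
  define m0 where "m0 = ((p - 1) * x) mod p"
  have "p dvd (p - 1) * x * Q + 1"
  proof -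
    have "(p - 1) * x * Q + 1 = (p - 1) * (Q * x) + 1" by (simp add: mult_ac)
    also have "\<dots> = (p - 1) * (p * y + 1) + 1" using xy by simp
    also have "\<dots> = p * ((p - 1) * y + 1)" using p5 by (cases p) (auto simp: algebra_simps)
    finally show ?thesis by simp
  qed
  moreover have "(m0 * Q + 1) mod p = ((p - 1) * x * Q + 1) mod p"
    unfolding m0_def by (metis mod_add_left_eq mod_mult_left_eq)
  ultimately have m0d: "p dvd m0 * Q + 1" by (simp add: dvd_eq_mod_eq_0)
  have m0lt: "m0 < p" unfolding m0_def using p5 by simp
  have m0pos: "m0 \<ge> 1" using m0d p5 by (cases m0) auto
  have uniq: "m = m0" if "1 \<le> m" "m < p" "p dvd m * Q + 1" for m
  proof (rule ccontr)
    assume ne: "m \<noteq> m0"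
    have key: "a < b \<Longrightarrow> b < p \<Longrightarrow> p dvd a * Q + 1 \<Longrightarrow> p dvd b * Q + 1 \<Longrightarrow> False" for a b
    proof -
      assume ab: "a < b" "b < p" "p dvd a * Q + 1" "p dvd b * Q + 1"
      have "p dvd (b * Q + 1) - (a * Q + 1)" using ab dvd_diff_nat by blast
      moreover have "(b * Q + 1) - (a * Q + 1) = (b - a) * Q" by (simp add: diff_mult_distrib)
      ultimately have "p dvd (b - a) * Q" by simp
      hence "p dvd (b - a)" using npQ pp prime_dvd_mult_iff by blast
      moreover have "0 < b - a" "b - a < p" using ab by auto
      ultimately show False by (auto dest: dvd_imp_le)
    qed
    show False using ne key[of m m0] key[of m0 m] that m0d m0lt by (cases "m < m0") auto
  qed
  have set1: "{m \<in> {1..P k - 1}. subset_gap k m = int (P k) - 1} = {1..p-1} - {m0}"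
  proof -
    have "m \<in> {1..p-1} \<Longrightarrow> m \<noteq> m0 \<Longrightarrow> subset_gap k m = int p - 1" for m
      using gap1 uniq by force
    moreover have "subset_gap k m0 \<noteq> int p - 1" using gap2 m0pos m0lt m0d by simp
    ultimately show ?thesis unfolding p_def by auto
  qed
  have set2: "{m \<in> {1..P k - 1}. subset_gap k m = int (P k) + 1} = {m0}"
  proof -
    have "m \<in> {1..p-1} \<Longrightarrow> m \<noteq> m0 \<Longrightarrow> subset_gap k m \<noteq> int p + 1" for m
      using gap1 uniq by force
    moreover have "subset_gap k m0 = int p + 1" using gap2 m0pos m0lt m0d by simp
    ultimately show ?thesis using m0pos m0lt unfolding p_def by auto
  qed
  have "card ({1..p-1} - {m0}) = p - 2" using m0pos m0lt by simp
  thus ?thesis using set1 set2 p_def by simp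
qed

end
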